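(* Fix a user $u$, a set of action items $\Omega_u^{\mathcal{A}}$ with real-valued actions, so that $\mathcal{A}_u=\mathbb{R}^{|\Omega_u^{\mathcal{A}}|}$, and a set of target items $\Omega_u^t$ containing item $i$. Let the score update be affine, $\phi_u(\vec a) = B_u\vec a + \vec c_u$ with $B_u\in\mathbb{R}^{m\times|\Omega_u^{\mathcal{A}}|}$ and $\vec c_u\in\mathbb{R}^m$, and let $\vec b_{uj}^\top$ be the $j$-th row of $B_u$. Suppose $\vec b_{ui}$ is a vertex of the convex hull of $\{\vec b_{uj}\}_{j\in\Omega_u^t}$, i.e. $\vec b_{ui}\notin\mathrm{conv}(\{\vec b_{uj}\}_{j\in\Omega_u^t}\setminus\{\vec b_{ui}\})$. For $\beta>0$ let \[\rho^\star_\beta(u,i)=\max_{\vec a\in\mathcal{A}_u}\frac{e^{\beta(\vec b_{ui}^\top\vec a + c_{ui})}}{\sum_{j\in\Omega_u^t}e^{\beta(\vec b_{uj}^\top\vec a + c_{uj})}}.\] Then $\rho^\star_\beta(u,i)\to 1$ as $\beta\to\infty$.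
   Context: $\rho^\star_\beta(u,i)$ is the maximum probability that item $i$ is recommended to user $u$. This is computed under the $\beta$-soft-max selection rule over the target items $\Omega_u^t$, after the user strategically sets the ratings of the action items to $\vec a$. The resulting score vector is $\phi_u(\vec a)=B_u\vec a+\vec c_u$. *)

theory Defs
  imports "HOL-Analysis.Analysis"
begin

text \<open>Affine score update: item j gets score  b j \<bullet> a + c j  (b j is the j-th row of B_u).
  Soft-max probability of recommending item i among the target items T at temperature beta.\<close>
definition softmax_prob ::
  "real \<Rightarrow> ('i \<Rightarrow> real^'n) \<Rightarrow> ('i \<Rightarrow> real) \<Rightarrow> 'i set \<Rightarrow> 'i \<Rightarrow> real^'n \<Rightarrow> real" where
  "softmax_prob beta b c T i a =
     exp (beta * (b i \<bullet> a + c i)) / (\<Sum>j\<in>T. exp (beta * (b j \<bullet> a + c j)))"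

definition rho_star ::
  "real \<Rightarrow> ('i \<Rightarrow> real^'n) \<Rightarrow> ('i \<Rightarrow> real) \<Rightarrow> 'i set \<Rightarrow> 'i \<Rightarrow> real" where
  "rho_star beta b c T i = (SUP a\<in>UNIV. softmax_prob beta b c T i a)"

end

theory Submission
  imports Defs
begin

lemma exp_lin_to_0:
  fixes k e :: real assumes "k < 0"
  shows "((\<lambda>t. exp (k * t + e)) \<longlongrightarrow> 0) at_top"
proof -
  have "filterlim (\<lambda>t. k * t) at_bot at_top"
    by (rule filterlim_tendsto_neg_mult_at_bot[OF tendsto_const assms filterlim_ident])
  hence "filterlim (\<lambda>t. e + k * t) at_bot at_top"
    using filterlim_tendsto_add_at_bot_iff[OF tendsto_const] by blast
  hence "filterlim (\<lambda>t. k * t + e) at_bot at_top" by (simp add: add.commute)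
  thus ?thesis by (rule filterlim_compose[OF exp_at_bot])
qed

lemma rho_one:
  fixes b :: "'i \<Rightarrow> real^'n" and c :: "'i \<Rightarrow> real" and T :: "'i set" and i :: 'i
  assumes fin: "finite T" and iT: "i \<in> T"
    and d: "\<And>j. j \<in> T \<Longrightarrow> j \<noteq> i \<Longrightarrow> (b j - b i) \<bullet> d < 0"
    and bp: "beta > 0"
  shows "rho_star beta b c T i = 1"
proof -
  define S where "S = T - {i}"
  have TS: "T = insert i S" "i \<notin> S" "finite S" using iT fin by (auto simp: S_def)
  have pos: "softmax_prob beta b c T i a > 0" for a
    unfolding softmax_prob_def using fin iT
    by (intro divide_pos_pos) (auto intro!: sum_pos)
  have le1: "softmax_prob beta b c T i a \<le> 1" for a
    unfolding softmax_prob_def using TS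
    by (simp add: sum_nonneg divide_le_eq_1 add_pos_nonneg)
  define e where "e j t = exp (beta * ((b j - b i) \<bullet> d) * t + beta * (c j - c i))" for j t
  have eq: "softmax_prob beta b c T i (t *\<^sub>R d) = 1 / (1 + (\<Sum>j\<in>S. e j t))" for t
  proof -
    let ?x = "exp (beta * (b i \<bullet> (t *\<^sub>R d) + c i))"
    have "exp (beta * (b j \<bullet> (t *\<^sub>R d) + c j)) = ?x * e j t" for j
    proof -
      have 1: "b j \<bullet> (t *\<^sub>R d) = t * (b j \<bullet> d)" "b i \<bullet> (t *\<^sub>R d) = t * (b i \<bullet> d)" by simp_all
      have 2: "(b j - b i) \<bullet> d = b j \<bullet> d - b i \<bullet> d" by (rule inner_diff_left)
      have 3: "beta * (t * (b j \<bullet> d) + c j) = beta * (t * (b i \<bullet> d) + c i) +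
          (beta * (b j \<bullet> d - b i \<bullet> d) * t + beta * (c j - c i))"
        by (simp add: algebra_simps)
      show ?thesis unfolding e_def mult_exp_exp 1 2 3 ..
    qed
    note H = this
    have "(\<Sum>j\<in>T. exp (beta * (b j \<bullet> (t *\<^sub>R d) + c j))) = (\<Sum>j\<in>T. ?x * e j t)"
      by (rule sum.cong[OF refl], rule H)
    also have "\<dots> = ?x * (\<Sum>j\<in>T. e j t)" by (rule sum_distrib_left[symmetric])
    also have "(\<Sum>j\<in>T. e j t) = e i t + (\<Sum>j\<in>S. e j t)"
      unfolding TS(1) using TS(2,3) by simp
    also have "e i t = 1" unfolding e_def by simp
    finally have "(\<Sum>j\<in>T. exp (beta * (b j \<bullet> (t *\<^sub>R d) + c j))) = ?x * (1 + (\<Sum>j\<in>S. e j t))" .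
    thus ?thesis unfolding softmax_prob_def by simp
  qed
  have lim: "((\<lambda>t. softmax_prob beta b c T i (t *\<^sub>R d)) \<longlongrightarrow> 1) at_top"
  proof -
    have "((\<lambda>t. \<Sum>j\<in>S. e j t) \<longlongrightarrow> 0) at_top"
    proof (rule tendsto_null_sum)
      fix j assume "j \<in> S"
      hence "beta * ((b j - b i) \<bullet> d) < 0" using d bp by (auto simp: S_def mult_pos_neg)
      thus "((\<lambda>t. e j t) \<longlongrightarrow> 0) at_top" unfolding e_def by (rule exp_lin_to_0)
    qed
    hence "((\<lambda>t. 1 / (1 + (\<Sum>j\<in>S. e j t))) \<longlongrightarrow> 1 / (1 + 0)) at_top"
      by (intro tendsto_intros) auto
    thus ?thesis unfolding eq by simp
  qed
  have bdd: "bdd_above (range (softmax_prob beta b c T i))"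
    by (rule bdd_aboveI2[where M=1]) (rule le1)
  have "1 \<le> rho_star beta b c T i"
    unfolding rho_star_def
    apply (rule tendsto_le[OF _ tendsto_const lim])
     apply simp
    apply (rule always_eventually, rule allI, rule cSUP_upper[OF UNIV_I bdd])
    done
  moreover have "rho_star beta b c T i \<le> 1"
    unfolding rho_star_def by (rule cSUP_least) (auto intro: le1)
  ultimately show ?thesis by simp
qed

theorem proposition2:
  fixes b :: "'i \<Rightarrow> real^'n" and c :: "'i \<Rightarrow> real" and T :: "'i set" and i :: 'i
  assumes "finite T" and "i \<in> T"
    and "b i \<notin> convex hull {b j | j. j \<in> T \<and> j \<noteq> i}"
  shows "((\<lambda>beta. rho_star beta b c T i) \<longlongrightarrow> 1) at_top"
proof -
  let ?H = "convex hull {b j | j. j \<in> T \<and> j \<noteq> i}"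
  have "finite {b j | j. j \<in> T \<and> j \<noteq> i}" using assms(1) by auto
  hence "compact ?H" by (rule finite_imp_compact_convex_hull)
  then obtain a z where az: "inner a (b i) < z" "\<forall>x\<in>?H. inner a x > z"
    using separating_hyperplane_closed_point[of ?H "b i"] assms(3)
    by (auto simp: compact_imp_closed)
  have d: "(b j - b i) \<bullet> (- a) < 0" if "j \<in> T" "j \<noteq> i" for j
  proof -
    have "b j \<in> ?H" using that by (intro hull_inc) auto
    hence "inner a (b j) > z" using az by auto
    moreover have "(b j - b i) \<bullet> (- a) = - (a \<bullet> b j - a \<bullet> b i)"
      by (simp add: inner_diff_left inner_diff_right inner_commute)
    ultimately show ?thesis using az(1) by linarith
  qed
  have "eventually (\<lambda>beta. rho_star beta b c T i = 1) at_top"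
    using eventually_gt_at_top[of "0::real"]
    by eventually_elim (rule rho_one[where d="- a" and b=b, OF assms(1,2) d])
  thus ?thesis by (rule tendsto_eventually)
qed

end
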